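(* Let $A\in\mathbb{Z}^{m\times n}$ have full column rank, $b\in\mathbb{Z}^m$, $c\in\mathbb{Q}^n$, and let $x^*$ be an optimal vertex of $\max\{c^\top x: Ax\le b,\ x\in\mathbb{R}^n\}$, where the integer program $\max\{c^\top x: Ax\le b,\ x\in\mathbb{Z}^n\}$ is feasible. Then there exist an optimal solution $z^*$ of this integer program, an integral matrix $\bar A$ whose rows are rows of $A$ or their negatives, and an integral vector $\bar b$ such that $\{x:\bar Ax\le\bar b\}\subseteq\{x:Ax\le b\}$, $x^*$ is a vertex of $\{x:\bar Ax\le \bar b\}$, and $\{x:\bar Ax\le\bar b\}\cap\mathbb{Z}^n=\{z^*\}$. *)

theory Defs
  imports "HOL-Analysis.Analysis"
begin

definition real_mat :: "int^'n^'m \<Rightarrow> real^'n^'m" where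
  "real_mat A = (\<chi> i j. real_of_int (A $ i $ j))"

definition polyhedron :: "int^'n^'m \<Rightarrow> int^'m \<Rightarrow> (real^'n) set" where
  "polyhedron A b = {x. \<forall>i. (\<Sum>j\<in>UNIV. real_of_int (A $ i $ j) * x $ j) \<le> real_of_int (b $ i)}"

definition polyhedron_list :: "((int^'n) \<times> int) list \<Rightarrow> (real^'n) set" where
  "polyhedron_list L = {x. \<forall>(r, \<beta>) \<in> set L. (\<Sum>j\<in>UNIV. real_of_int (r $ j) * x $ j) \<le> real_of_int \<beta>}"

definition integral_vec :: "real^'n \<Rightarrow> bool" where
  "integral_vec x \<longleftrightarrow> (\<forall>j. x $ j \<in> \<int>)"

definition vertex_of :: "real^'n \<Rightarrow> (real^'n) set \<Rightarrow> bool" where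
  "vertex_of v P \<longleftrightarrow> v extreme_point_of P"

end

theory Submission imports Defs begin
definition ax :: "int^'n^'m \<Rightarrow> 'm \<Rightarrow> real^'n \<Rightarrow> real" where
  "ax A i x = (\<Sum>j\<in>UNIV. real_of_int (A$i$j) * x$j)"

lemma ax_add: "ax A i (x + y) = ax A i x + ax A i y"
  by (simp add: ax_def algebra_simps sum.distrib)

lemma ax_diff: "ax A i (x - y) = ax A i x - ax A i y"
  by (simp add: ax_def algebra_simps sum_subtractf)

lemma ax_scale: "ax A i (t *\<^sub>R x) = t * ax A i x"
  by (simp add: ax_def sum_distrib_left mult_ac)

lemma ax_uminus: "ax A i (- x) = - ax A i x"
  by (simp add: ax_def sum_negf)

lemma polyhedron_ax: "x \<in> polyhedron A b \<longleftrightarrow> (\<forall>i. ax A i x \<le> b$i)"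
  by (simp add: polyhedron_def ax_def)

lemma ax_Ints: "integral_vec z \<Longrightarrow> ax A i z \<in> \<int>"
  unfolding ax_def integral_vec_def
  by (intro Ints_sum Ints_mult) auto

lemma dot_Ints:
  assumes "integral_vec (z::real^'n)" "\<forall>j. D * c$j \<in> \<int>"
  shows "D * (c \<bullet> z) \<in> \<int>"
proof -
  have "D * (c \<bullet> z) = (\<Sum>j\<in>UNIV. (D * c$j) * z$j)"
    by (simp add: inner_vec_def sum_distrib_left mult_ac)
  also have "\<dots> \<in> \<int>" using assms unfolding integral_vec_def
    by (intro Ints_sum) (simp add: Ints_mult)
  finally show ?thesis .
qed

lemma common_denom:
  assumes "\<forall>j. (c::real^'n) $ j \<in> \<rat>"
  shows "\<exists>D::real. D > 0 \<and> (\<forall>j. D * c$j \<in> \<int>)"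
proof -
  have "\<forall>j. \<exists>q::int. q > 0 \<and> of_int q * c$j \<in> \<int>"
  proof
    fix j
    from assms have "c$j \<in> \<rat>" by auto
    then obtain a b where "b > 0" "c$j = of_int a / of_int b" by (auto elim: Rats_cases')
    then show "\<exists>q::int. q > 0 \<and> of_int q * c$j \<in> \<int>"
      by (intro exI[of _ b]) auto
  qed
  then obtain Q where Q: "\<And>j. Q j > 0" "\<And>j. of_int (Q j) * c$j \<in> \<int>" by metis
  define D where "D = (\<Prod>j\<in>UNIV. real_of_int (Q j))"
  have "D > 0" unfolding D_def using Q(1) by (intro prod_pos) auto
  moreover have "D * c$j \<in> \<int>" for j
  proof -
    have "D = real_of_int (Q j) * (\<Prod>k\<in>UNIV-{j}. real_of_int (Q k))"
      unfolding D_def by (simp add: prod.remove)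
    then have "D * c$j = (of_int (Q j) * c$j) * (\<Prod>k\<in>UNIV-{j}. real_of_int (Q k))"
      by simp
    also have "\<dots> \<in> \<int>" by (rule Ints_mult[OF Q(2)], rule Ints_prod) auto
    finally show ?thesis .
  qed
  ultimately show ?thesis by blast
qed

lemma small_step:
  assumes x: "x \<in> polyhedron A b"
    and d: "\<And>i. ax A i x = real_of_int (b$i) \<Longrightarrow> ax A i d \<le> 0"
  shows "\<exists>t>0. \<forall>s. 0 \<le> s \<and> s \<le> t \<longrightarrow> x + s *\<^sub>R d \<in> polyhedron A b"
proof -
  define K where "K = {i. ax A i d > 0}"
  define t where "t = Min (insert 1 ((\<lambda>i. (b$i - ax A i x) / ax A i d) ` K))"
  have xb: "ax A i x \<le> b$i" for i using x by (simp add: polyhedron_ax)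
  have slack: "ax A i x < b$i" if "i \<in> K" for i
    using d[of i] xb[of i] that unfolding K_def by force
  have fin: "finite (insert 1 ((\<lambda>i. (b$i - ax A i x) / ax A i d) ` K))" by simp
  have "t > 0" unfolding t_def
    using slack by (subst Min_gr_iff[OF fin]) (auto simp: K_def)
  moreover have "x + s *\<^sub>R d \<in> polyhedron A b" if s: "0 \<le> s" "s \<le> t" for s
    unfolding polyhedron_ax
  proof
    fix i
    show "ax A i (x + s *\<^sub>R d) \<le> b$i"
    proof (cases "i \<in> K")
      case True
      then have pos: "ax A i d > 0" by (simp add: K_def)
      have "t \<le> (b$i - ax A i x) / ax A i d" unfolding t_def
        using True by (intro Min_le[OF fin]) auto
      then have "s \<le> (b$i - ax A i x) / ax A i d" using s by linarith
      then have "s * ax A i d \<le> b$i - ax A i x" using pos by (simp add: field_simps)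
      then show ?thesis by (simp add: ax_add ax_scale)
    next
      case False
      then have "ax A i d \<le> 0" by (simp add: K_def)
      then have "s * ax A i d \<le> 0" using s by (simp add: mult_nonneg_nonpos)
      then show ?thesis using xb[of i] by (simp add: ax_add ax_scale)
    qed
  qed
  ultimately show ?thesis by blast
qed
theorem lemma8:
  fixes A :: "int^'n^'m" and b :: "int^'m" and c :: "real^'n" and xstar :: "real^'n"
  assumes "rank (real_mat A) = CARD('n)"
    and "\<forall>j. c $ j \<in> \<rat>"
    and "vertex_of xstar (polyhedron A b)"
    and "\<forall>x\<in>polyhedron A b. c \<bullet> x \<le> c \<bullet> xstar"
    and "\<exists>z\<in>polyhedron A b. integral_vec z"
  shows "\<exists>zstar Abar.
           zstar \<in> polyhedron A b \<and> integral_vec zstar \<and>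
           (\<forall>z\<in>polyhedron A b. integral_vec z \<longrightarrow> c \<bullet> z \<le> c \<bullet> zstar) \<and>
           (\<forall>(r, \<beta>) \<in> set Abar. \<exists>i. r = A $ i \<or> r = - (A $ i)) \<and>
           polyhedron_list Abar \<subseteq> polyhedron A b \<and>
           vertex_of xstar (polyhedron_list Abar) \<and>
           {x\<in>polyhedron_list Abar. integral_vec x} = {zstar}"
proof -
  define P where "P = polyhedron A b"
  define IP where "IP = {z \<in> P. integral_vec z}"
  have ext: "xstar extreme_point_of P" using assms(3) by (simp add: vertex_of_def P_def)
  then have xP: "xstar \<in> P" by (simp add: extreme_point_of_def)
  have opt: "\<And>x. x \<in> P \<Longrightarrow> c \<bullet> x \<le> c \<bullet> xstar" using assms(4) by (simp add: P_def)
  obtain z0 where z0: "z0 \<in> IP" using assms(5) by (auto simp: IP_def P_def)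
  obtain D :: real where D: "D > 0" "\<forall>j. D * c$j \<in> \<int>" using common_denom[OF assms(2)] by blast
  define f where "f z = \<lfloor>D * (c \<bullet> z)\<rfloor>" for z
  have f_eq: "real_of_int (f z) = D * (c \<bullet> z)" if "z \<in> IP" for z
    using dot_Ints[of z D c] that D unfolding f_def IP_def by (auto elim: Ints_cases)
  define U where "U = \<lceil>D * (c \<bullet> xstar)\<rceil>"
  have fU: "f z \<le> U" if "z \<in> IP" for z
  proof -
    have "D * (c \<bullet> z) \<le> D * (c \<bullet> xstar)" using opt[of z] that D by (simp add: IP_def)
    then show ?thesis unfolding f_def U_def by linarith
  qed
  obtain z1 where z1: "z1 \<in> IP" "\<And>y. y \<in> IP \<Longrightarrow> nat (U - f z1) \<le> nat (U - f y)"
    using ex_has_least_nat[of "\<lambda>z. z \<in> IP", OF z0, of "\<lambda>z. nat (U - f z)"] by blast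
  have z1opt: "c \<bullet> z \<le> c \<bullet> z1" if "z \<in> IP" for z
  proof -
    have "f z \<le> f z1" using z1(2)[OF that] fU[OF that] fU[OF z1(1)] by linarith
    then have "D * (c \<bullet> z) \<le> D * (c \<bullet> z1)" using f_eq[OF that] f_eq[OF z1(1)] by linarith
    then show ?thesis using D by simp
  qed
  define S where "S = {z \<in> IP. c \<bullet> z1 \<le> c \<bullet> z}"
  define T where "T = {i. ax A i xstar = real_of_int (b$i)}"
  define w where "w z = \<lfloor>\<Sum>i\<in>T. ax A i z\<rfloor>" for z
  define W where "W = (\<Sum>i\<in>T. b$i)"
  have w_eq: "real_of_int (w z) = (\<Sum>i\<in>T. ax A i z)" if "z \<in> IP" for z
  proof -
    have "(\<Sum>i\<in>T. ax A i z) \<in> \<int>" using that ax_Ints by (intro Ints_sum) (auto simp: IP_def)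
    then show ?thesis unfolding w_def by (auto elim: Ints_cases)
  qed
  have wW: "w z \<le> W" if "z \<in> IP" for z
  proof -
    have "(\<Sum>i\<in>T. ax A i z) \<le> (\<Sum>i\<in>T. real_of_int (b$i))"
      using that by (intro sum_mono) (auto simp: IP_def P_def polyhedron_ax)
    then show ?thesis unfolding w_def W_def by (simp add: floor_le_iff)
  qed
  have z1S: "z1 \<in> S" using z1(1) by (simp add: S_def)
  obtain zstar where zs: "zstar \<in> S" "\<And>y. y \<in> S \<Longrightarrow> nat (W - w zstar) \<le> nat (W - w y)"
    using ex_has_least_nat[of "\<lambda>z. z \<in> S", OF z1S, of "\<lambda>z. nat (W - w z)"] by blast
  have zsIP: "zstar \<in> IP" using zs(1) by (simp add: S_def)
  have zsmax: "(\<Sum>i\<in>T. ax A i y) \<le> (\<Sum>i\<in>T. ax A i zstar)" if "y \<in> S" for y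
  proof -
    have yIP: "y \<in> IP" using that by (simp add: S_def)
    have "w y \<le> w zstar" using zs(2)[OF that] wW[OF yIP] wW[OF zsIP] by linarith
    then show ?thesis using w_eq[OF yIP] w_eq[OF zsIP] by linarith
  qed
  have zsopt: "c \<bullet> z \<le> c \<bullet> zstar" if "z \<in> IP" for z
    using z1opt[OF that] zs(1) by (simp add: S_def)
  have zsP: "zstar \<in> P" and zsint: "integral_vec zstar" using zsIP by (auto simp: IP_def)
  define R where "R = (\<lambda>i. (A$i, b$i)) ` UNIV \<union> (\<lambda>i. (- (A$i), - \<lceil>ax A i zstar\<rceil>)) ` T"
  have "finite R" unfolding R_def by simp
  then obtain L where L: "set L = R" using finite_list by blast
  have negrow: "(\<Sum>j\<in>UNIV. real_of_int ((- (A$i)) $ j) * x $ j) = - ax A i x" for i and x :: "real^'n"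
    by (simp add: ax_def sum_negf ball_Un Ball_image_comp o_def)
  have PL: "x \<in> polyhedron_list L \<longleftrightarrow> (\<forall>i. ax A i x \<le> b$i) \<and> (\<forall>i\<in>T. \<lceil>ax A i zstar\<rceil> \<le> ax A i x)"
    for x
    unfolding polyhedron_list_def L R_def
    by (simp add: ax_def sum_negf ball_Un Ball_image_comp o_def)
  have sub: "polyhedron_list L \<subseteq> P" by (auto simp: PL P_def polyhedron_ax)
  have xL: "xstar \<in> polyhedron_list L"
  proof -
    have "\<lceil>ax A i zstar\<rceil> \<le> ax A i xstar" if "i \<in> T" for i
    proof -
      have "ax A i zstar \<le> b$i" using zsP by (simp add: P_def polyhedron_ax)
      then have "\<lceil>ax A i zstar\<rceil> \<le> b$i" by (simp add: ceiling_le_iff)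
      then show ?thesis using that by (simp add: T_def)
    qed
    then show ?thesis using xP by (simp add: PL P_def polyhedron_ax)
  qed
  have vL: "vertex_of xstar (polyhedron_list L)"
    using ext sub xL unfolding vertex_of_def extreme_point_of_def by blast
  have zsL: "zstar \<in> polyhedron_list L"
  proof -
    have "\<lceil>ax A i zstar\<rceil> \<le> ax A i zstar" for i
      using ax_Ints[OF zsint, of A i] by (auto elim: Ints_cases)
    then show ?thesis using zsP by (simp add: PL P_def polyhedron_ax)
  qed
  have uniq: "z = zstar" if zL: "z \<in> polyhedron_list L" and zint: "integral_vec z" for z
  proof -
    have zP: "z \<in> P" using zL sub by blast
    have geT: "ax A i zstar \<le> ax A i z" if "i \<in> T" for i
      using zL that by (simp add: PL) (meson le_of_int_ceiling order_trans)
    obtain t where t: "t > 0" "\<And>s. 0 \<le> s \<Longrightarrow> s \<le> t \<Longrightarrow> xstar + s *\<^sub>R (zstar - z) \<in> P"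
      using small_step[of xstar A b "zstar - z"] xP geT
      by (auto simp: P_def T_def ax_diff)
    have "c \<bullet> (xstar + t *\<^sub>R (zstar - z)) \<le> c \<bullet> xstar" using opt t by auto
    then have "t * (c \<bullet> (zstar - z)) \<le> 0" by (simp add: inner_add_right)
    then have "c \<bullet> (zstar - z) \<le> 0" using t(1) by (simp add: mult_le_0_iff)
    then have "c \<bullet> zstar \<le> c \<bullet> z" by (simp add: inner_diff_right)
    then have zS: "z \<in> S" using zsopt[OF zsIP] zs(1) zP zint by (auto simp: S_def IP_def)
    have "(\<Sum>i\<in>T. ax A i z - ax A i zstar) \<le> 0"
      using zsmax[OF zS] by (simp add: sum_subtractf)
    moreover have "\<forall>i\<in>T. 0 \<le> ax A i z - ax A i zstar" using geT by auto
    ultimately have "\<forall>i\<in>T. ax A i z - ax A i zstar = 0"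
      using sum_nonneg_eq_0_iff[of T "\<lambda>i. ax A i z - ax A i zstar"]
      by (simp add: sum_nonneg antisym)
    then have d0: "\<And>i. i \<in> T \<Longrightarrow> ax A i (z - zstar) = 0" by (simp add: ax_diff)
    obtain t1 where t1: "t1 > 0" "\<And>s. 0 \<le> s \<Longrightarrow> s \<le> t1 \<Longrightarrow> xstar + s *\<^sub>R (z - zstar) \<in> P"
      using small_step[of xstar A b "z - zstar"] xP d0
      by (auto simp: P_def T_def)
    obtain t2 where t2: "t2 > 0" "\<And>s. 0 \<le> s \<Longrightarrow> s \<le> t2 \<Longrightarrow> xstar + s *\<^sub>R (- (z - zstar)) \<in> P"
    proof -
      have "\<And>i. ax A i xstar = real_of_int (b $ i) \<Longrightarrow> ax A i (- (z - zstar)) \<le> 0"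
        using d0 by (simp add: T_def ax_diff)
      then obtain t where "t > 0" "\<forall>s. 0 \<le> s \<and> s \<le> t \<longrightarrow> xstar + s *\<^sub>R (- (z - zstar)) \<in> polyhedron A b"
        using small_step[of xstar A b "- (z - zstar)"] xP unfolding P_def by blast
      then show ?thesis using that unfolding P_def by blast
    qed
    define s where "s = min t1 t2"
    have s: "s > 0" using t1 t2 by (simp add: s_def)
    define p where "p = xstar + s *\<^sub>R (z - zstar)"
    define q where "q = xstar - s *\<^sub>R (z - zstar)"
    have pP: "p \<in> P" unfolding p_def using t1(2)[of s] s by (simp add: s_def)
    have qP: "q \<in> P" unfolding q_def
    proof -
      have "xstar + s *\<^sub>R (- (z - zstar)) \<in> P" using t2(2)[of s] s by (simp add: s_def)
      moreover have "xstar + s *\<^sub>R (- (z - zstar)) = xstar - s *\<^sub>R (z - zstar)"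
        by (simp only: scaleR_minus_right diff_conv_add_uminus)
      ultimately show "xstar - s *\<^sub>R (z - zstar) \<in> P" by metis
    qed
    have mid: "midpoint q p = xstar"
    proof -
      have "q + p = xstar + xstar" unfolding p_def q_def by simp
      also have "\<dots> = (2::real) *\<^sub>R xstar" by (rule scaleR_2[symmetric])
      finally have "q + p = (2::real) *\<^sub>R xstar" .
      then show ?thesis unfolding midpoint_def by simp
    qed
    show ?thesis
    proof (rule ccontr)
      assume "z \<noteq> zstar"
      have pq: "p - q = (s + s) *\<^sub>R (z - zstar)" unfolding p_def q_def scaleR_left_distrib by simp
      have "q \<noteq> p"
      proof
        assume "q = p"
        then have "(s + s) *\<^sub>R (z - zstar) = 0" using pq by simp
        then show False using s \<open>z \<noteq> zstar\<close> by simp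
      qed
      then have "midpoint q p \<in> open_segment q p" by simp
      then have "xstar \<in> open_segment q p" using mid by simp
      then show False using ext pP qP unfolding extreme_point_of_def by blast
    qed
  qed
  show ?thesis
  proof (intro exI[of _ zstar] exI[of _ L] conjI)
    show "zstar \<in> polyhedron A b" using zsP by (simp add: P_def)
    show "integral_vec zstar" by (rule zsint)
    show "\<forall>z\<in>polyhedron A b. integral_vec z \<longrightarrow> c \<bullet> z \<le> c \<bullet> zstar"
      using zsopt by (auto simp: IP_def P_def)
    show "\<forall>(r, \<beta>) \<in> set L. \<exists>i. r = A $ i \<or> r = - (A $ i)"
      by (auto simp: L R_def)
    show "polyhedron_list L \<subseteq> polyhedron A b" using sub by (simp add: P_def)
    show "vertex_of xstar (polyhedron_list L)" by (rule vL)
    show "{x\<in>polyhedron_list L. integral_vec x} = {zstar}"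
    proof (rule set_eqI, rule iffI)
      fix x assume "x \<in> {x\<in>polyhedron_list L. integral_vec x}"
      then have "x = zstar" using uniq by blast
      then show "x \<in> {zstar}" by simp
    next
      fix x assume "x \<in> {zstar}"
      then show "x \<in> {x\<in>polyhedron_list L. integral_vec x}" using zsL zsint by simp
    qed
  qed
qed
end
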